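(* Let $d\ge2$, $\Omega\subset\mathbb{R}^d$ a convex polytope, $\mathcal{T}_h$ a shape-regular simplicial triangulation of $\Omega$, $\varepsilon>0$, and let $V_h$, $\Pi_h$, $\Pi_h^c$, $b_h$ and $|||\cdot|||$ be as in the context. Then for every $v\in V_h$, $$\tfrac12|||v|||^2\le b_h(v,v).$$
   Context: For a simplex $K$ with vertices $a_1,\dots,a_{d+1}$ and barycentric coordinates $\lambda_i$, $Z_K=\mathbb{P}_2(K)\oplus\operatorname{span}\{\lambda_i^2\lambda_j-\lambda_i\lambda_j^2:i<j\}$ and $e_{ij}=a_j-a_i$. $Z_h=\{v\in H^1(\Omega): v|_K\in Z_K\ \forall K,\ v(a),\nabla v(a)\text{ single-valued at every vertex }a\}$; $V_h=\{v\in Z_h: v(a)=0,\ \nabla v(a)=0\text{ at every vertex }a\in\partial\Omega\}$. For $v\in Z_h$ and $K\in\mathcal{T}_h$, $\Pi_Kv=\sum_i v(a_i)\lambda_i+\sum_i\sum_{j\ne i}(e_{ij}\cdot\nabla v|_K)(a_i)\tfrac12\lambda_i\lambda_j$; $(\Pi_hv)|_K=\Pi_Kv$ and $\Pi_h^c=I-\Pi_h$. $\nabla_h^k$ denotes the elementwise $k$-th derivative. For $v,w\in V_h$: $b_h(v,w)=\varepsilon^2\bigl((\nabla_h^2\Pi_hv,\nabla_h^2\Pi_hw)+(\nabla_h^2\Pi_h^cv,\nabla_h^2\Pi_h^cw)\bigr)+(\nabla v,\nabla w)$ and $|||v|||=\bigl(\varepsilon^2\|\nabla_h^2v\|_{L^2}^2+\|\nabla_hv\|_{L^2}^2\bigr)^{1/2}$.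 *)

theory Defs
  imports "HOL-Analysis.Analysis"
begin

(* Points of R^d are elements of a euclidean_space 'a, d = DIM('a).
   A simplex K is given by its (finite, affinely independent) vertex set S,
   K = convex hull S. *)

definition simplex_verts :: "'a::euclidean_space set \<Rightarrow> bool" where
  "simplex_verts S \<longleftrightarrow> finite S \<and> card S = Suc DIM('a) \<and> \<not> affine_dependent S"

definition bary :: "'a::euclidean_space set \<Rightarrow> 'a \<Rightarrow> 'a \<Rightarrow> real" where
  "bary S p x = (THE l. (\<forall>q. q \<notin> S \<longrightarrow> l q = 0) \<and> (\<Sum>q\<in>S. l q) = 1
                        \<and> (\<Sum>q\<in>S. l q *\<^sub>R q) = x) p"

definition P2 :: "('a::euclidean_space \<Rightarrow> real) \<Rightarrow> bool" where
  "P2 f \<longleftrightarrow> (\<exists>(c::real) (b::'a) (A::'a \<Rightarrow> 'a). linear A \<and> (\<forall>x. f x = c + b \<bullet> x + x \<bullet> A x))"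

(* Z_K = P_2(K) + span{lambda_i^2 lambda_j - lambda_i lambda_j^2 : i<j}
   (span over ordered pairs i<>j is the same space) *)
definition ZK :: "'a::euclidean_space set \<Rightarrow> ('a \<Rightarrow> real) \<Rightarrow> bool" where
  "ZK S f \<longleftrightarrow> (\<exists>g (c :: 'a \<Rightarrow> 'a \<Rightarrow> real). P2 g \<and>
      (\<forall>x. f x = g x + (\<Sum>p\<in>S. \<Sum>q\<in>S - {p}.
          c p q * ((bary S p x)\<^sup>2 * bary S q x - bary S p x * (bary S q x)\<^sup>2))))"

(* conforming simplicial triangulation T (set of vertex sets) of Omega *)
definition triangulation :: "'a::euclidean_space set set \<Rightarrow> 'a set \<Rightarrow> bool" where
  "triangulation T \<Omega> \<longleftrightarrow> finite T \<and> T \<noteq> {} \<and> (\<forall>S\<in>T. simplex_verts S)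
     \<and> \<Union> ((\<lambda>S. convex hull S) ` T) = \<Omega>
     \<and> (\<forall>S\<in>T. \<forall>S'\<in>T. convex hull S \<inter> convex hull S' = convex hull (S \<inter> S'))"

definition inradius :: "'a::euclidean_space set \<Rightarrow> real" where
  "inradius K = Sup {r. \<exists>c. ball c r \<subseteq> K}"

definition shape_regular :: "real \<Rightarrow> 'a::euclidean_space set set \<Rightarrow> bool" where
  "shape_regular \<sigma> T \<longleftrightarrow> (\<forall>S\<in>T. diameter (convex hull S) \<le> \<sigma> * inradius (convex hull S))"

(* gradient of v|_K at a point a of K, as a linear map (directional derivatives) *)
definition gradK :: "('a::euclidean_space \<Rightarrow> real) \<Rightarrow> 'a set \<Rightarrow> 'a \<Rightarrow> 'a \<Rightarrow> real" where
  "gradK v S a = frechet_derivative v (at a within convex hull S)"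

(* Z_h: restrictions to elements lie in Z_K, v in H^1 (continuity),
   v and grad v single-valued at vertices *)
definition Zh :: "'a::euclidean_space set set \<Rightarrow> 'a set \<Rightarrow> ('a \<Rightarrow> real) \<Rightarrow> bool" where
  "Zh T \<Omega> v \<longleftrightarrow> continuous_on \<Omega> v
     \<and> (\<forall>S\<in>T. \<exists>f. ZK S f \<and> (\<forall>x\<in>convex hull S. v x = f x))
     \<and> (\<forall>S\<in>T. \<forall>S'\<in>T. \<forall>a\<in>S \<inter> S'. gradK v S a = gradK v S' a)"

definition Vh :: "'a::euclidean_space set set \<Rightarrow> 'a set \<Rightarrow> ('a \<Rightarrow> real) \<Rightarrow> bool" where
  "Vh T \<Omega> v \<longleftrightarrow> Zh T \<Omega> v \<and>
     (\<forall>S\<in>T. \<forall>a\<in>S. a \<in> frontier \<Omega> \<longrightarrow> v a = 0 \<and> gradK v S a = (\<lambda>_. 0))"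

definition PiK :: "'a::euclidean_space set \<Rightarrow> ('a \<Rightarrow> real) \<Rightarrow> 'a \<Rightarrow> real" where
  "PiK S v x = (\<Sum>p\<in>S. v p * bary S p x)
     + (\<Sum>p\<in>S. \<Sum>q\<in>S - {p}. gradK v S p (q - p) * (1/2) * bary S p x * bary S q x)"

definition pd :: "('a::euclidean_space \<Rightarrow> real) \<Rightarrow> 'a \<Rightarrow> 'a \<Rightarrow> real" where
  "pd f i x = frechet_derivative f (at x) i"

definition grad_sq :: "('a::euclidean_space \<Rightarrow> real) \<Rightarrow> 'a \<Rightarrow> real" where
  "grad_sq f x = (\<Sum>i\<in>Basis. (pd f i x)\<^sup>2)"

definition hess_sq :: "('a::euclidean_space \<Rightarrow> real) \<Rightarrow> 'a \<Rightarrow> real" where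
  "hess_sq f x = (\<Sum>i\<in>Basis. \<Sum>k\<in>Basis. (pd (\<lambda>y. pd f i y) k x)\<^sup>2)"

definition bh :: "real \<Rightarrow> 'a::euclidean_space set set \<Rightarrow> ('a \<Rightarrow> real) \<Rightarrow> real" where
  "bh \<epsilon> T v = \<epsilon>\<^sup>2 * ((\<Sum>S\<in>T. integral (convex hull S) (hess_sq (PiK S v)))
                 + (\<Sum>S\<in>T. integral (convex hull S) (hess_sq (\<lambda>x. v x - PiK S v x))))
             + (\<Sum>S\<in>T. integral (convex hull S) (grad_sq v))"

definition tnorm_sq :: "real \<Rightarrow> 'a::euclidean_space set set \<Rightarrow> ('a \<Rightarrow> real) \<Rightarrow> real" where
  "tnorm_sq \<epsilon> T v = \<epsilon>\<^sup>2 * (\<Sum>S\<in>T. integral (convex hull S) (hess_sq v))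
             + (\<Sum>S\<in>T. integral (convex hull S) (grad_sq v))"

end

theory Submission imports Defs begin

inductive pl :: "('a::euclidean_space \<Rightarrow> real) \<Rightarrow> bool" where
  pl_const: "pl (\<lambda>x. c)"
| pl_lin: "linear L \<Longrightarrow> pl L"
| pl_add: "pl f \<Longrightarrow> pl g \<Longrightarrow> pl (\<lambda>x. f x + g x)"
| pl_mult: "pl f \<Longrightarrow> pl g \<Longrightarrow> pl (\<lambda>x. f x * g x)"

lemma pl_deriv: "pl f \<Longrightarrow> \<exists>D. (\<forall>x. (f has_derivative D x) (at x)) \<and> (\<forall>i. pl (\<lambda>x. D x i))"
proof (induction rule: pl.induct)
  case (pl_const c)
  show ?case by (rule exI[of _ "\<lambda>x h. 0"]) (auto intro: pl.pl_const)
next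
  case (pl_lin L)
  then show ?case
    by (intro exI[of _ "\<lambda>x. L"]) (auto intro: pl.pl_const bounded_linear_imp_has_derivative simp: linear_conv_bounded_linear)
next
  case (pl_add f g)
  then obtain Df Dg where "\<forall>x. (f has_derivative Df x) (at x)" "\<forall>i. pl (\<lambda>x. Df x i)"
     "\<forall>x. (g has_derivative Dg x) (at x)" "\<forall>i. pl (\<lambda>x. Dg x i)" by blast
  then show ?case
    by (intro exI[of _ "\<lambda>x h. Df x h + Dg x h"]) (auto intro: pl.pl_add has_derivative_add)
next
  case (pl_mult f g)
  then obtain Df Dg where "\<forall>x. (f has_derivative Df x) (at x)" "\<forall>i. pl (\<lambda>x. Df x i)"
     "\<forall>x. (g has_derivative Dg x) (at x)" "\<forall>i. pl (\<lambda>x. Dg x i)" by blast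
  then show ?case
    by (intro exI[of _ "\<lambda>x h. f x * Dg x h + Df x h * g x"]) 
       (auto intro!: pl.pl_add pl.pl_mult pl_mult.hyps has_derivative_mult)
qed

lemma pl_has_deriv: "pl f \<Longrightarrow> (f has_derivative frechet_derivative f (at x)) (at x)"
  using pl_deriv frechet_derivative_at by metis

lemma pl_pd: "pl f \<Longrightarrow> pl (\<lambda>x. pd f i x)"
proof -
  assume "pl f"
  then obtain D where D: "\<forall>x. (f has_derivative D x) (at x)" "\<forall>i. pl (\<lambda>x. D x i)"
    using pl_deriv by blast
  have "(\<lambda>x. pd f i x) = (\<lambda>x. D x i)"
    using D(1) frechet_derivative_at unfolding pd_def by metis
  then show ?thesis using D(2) by simp
qed

lemma pl_cont: "pl f \<Longrightarrow> continuous_on A f"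
  by (meson continuous_at_imp_continuous_on has_derivative_continuous pl_has_deriv)

lemma pl_sum: "finite A \<Longrightarrow> (\<And>a. a \<in> A \<Longrightarrow> pl (f a)) \<Longrightarrow> pl (\<lambda>x. \<Sum>a\<in>A. f a x)"
proof (induction A rule: finite_induct)
  case empty then show ?case using pl_const[of 0] by simp
next
  case (insert a A) then show ?case by (simp add: pl_add)
qed

lemma pl_neg: "pl f \<Longrightarrow> pl (\<lambda>x. - f x)"
  using pl_mult[OF pl_const[of "-1"]] by simp

lemma pl_diff: "pl f \<Longrightarrow> pl g \<Longrightarrow> pl (\<lambda>x. f x - g x)"
  using pl_add[OF _ pl_neg] by simp

lemma pd_add: assumes "pl f" "pl g" shows "pd (\<lambda>x. f x + g x) i x = pd f i x + pd g i x"
  unfolding pd_def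
  using has_derivative_add[OF pl_has_deriv[OF assms(1), of x] pl_has_deriv[OF assms(2), of x]] frechet_derivative_at
  by metis

lemma pd_local: assumes "pl f" "open U" "x \<in> U" "\<And>y. y \<in> U \<Longrightarrow> v y = f y"
  shows "pd v i x = pd f i x"
proof -
  have "(v has_derivative frechet_derivative f (at x)) (at x)"
    using has_derivative_transform_within_open[OF pl_has_deriv[OF assms(1)] assms(2,3)] assms(4)
    by metis
  then show ?thesis unfolding pd_def using frechet_derivative_at by metis
qed

lemma hess_local: assumes "pl f" "open U" "x \<in> U" "\<And>y. y \<in> U \<Longrightarrow> v y = f y"
  shows "hess_sq v x = hess_sq f x"
proof -
  have "pd (\<lambda>y. pd v i y) k x = pd (\<lambda>y. pd f i y) k x" for i k
    by (rule pd_local[OF pl_pd[OF assms(1)] assms(2,3)]) (rule pd_local[OF assms(1,2) _ assms(4)])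
  then show ?thesis unfolding hess_sq_def by simp
qed

lemma pl_hess: "pl f \<Longrightarrow> pl (hess_sq f)"
proof -
  assume "pl f"
  have "pl (\<lambda>x. (pd (\<lambda>y. pd f i y) k x)\<^sup>2)" for i k
    unfolding power2_eq_square by (intro pl_mult pl_pd \<open>pl f\<close>)
  then show ?thesis unfolding hess_sq_def[abs_def]
    by (intro pl_sum) auto
qed

lemma hess_add: assumes "pl f" "pl g"
  shows "hess_sq (\<lambda>x. f x + g x) x \<le> 2 * hess_sq f x + 2 * hess_sq g x"
proof -
  have e1: "(\<lambda>y. pd (\<lambda>x. f x + g x) i y) = (\<lambda>y. pd f i y + pd g i y)" for i
    using pd_add[OF assms] by auto
  have e2: "pd (\<lambda>y. pd (\<lambda>x. f x + g x) i y) k x = pd (\<lambda>y. pd f i y) k x + pd (\<lambda>y. pd g i y) k x" for i k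
    unfolding e1 by (intro pd_add pl_pd assms)
  have ineq: "(a + b)\<^sup>2 \<le> 2 * a\<^sup>2 + 2 * b\<^sup>2" for a b :: real
    using zero_le_power2[of "a - b"] unfolding power2_sum power2_diff by linarith
  have "hess_sq (\<lambda>x. f x + g x) x = (\<Sum>i\<in>Basis. \<Sum>k\<in>Basis. (pd (\<lambda>y. pd f i y) k x + pd (\<lambda>y. pd g i y) k x)\<^sup>2)"
    unfolding hess_sq_def e2 ..
  also have "\<dots> \<le> (\<Sum>i\<in>Basis. \<Sum>k\<in>Basis. 2 * (pd (\<lambda>y. pd f i y) k x)\<^sup>2 + 2 * (pd (\<lambda>y. pd g i y) k x)\<^sup>2)"
    by (intro sum_mono ineq)
  also have "\<dots> = 2 * hess_sq f x + 2 * hess_sq g x"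
    unfolding hess_sq_def sum.distrib sum_distrib_left ..
  finally show ?thesis .
qed

lemma cont_int: fixes f :: "'a::euclidean_space \<Rightarrow> real"
  assumes "compact S" "continuous_on S f" shows "f integrable_on S"
  using borel_integrable_compact[OF assms] set_borel_integral_eq_integral(1)
  unfolding set_integrable_def by blast


lemma bary_unique_fun: assumes "simplex_verts S"
  shows "\<exists>!l. (\<forall>q. q \<notin> S \<longrightarrow> l q = 0) \<and> (\<Sum>q\<in>S. l q) = 1 \<and> (\<Sum>q\<in>S. l q *\<^sub>R q) = x"
proof -
  have fin: "finite S" and ind: "\<not> affine_dependent S" and card: "card S = Suc DIM('a)"
    using assms unfolding simplex_verts_def by auto
  have "aff_dim S = DIM('a)" using aff_dim_affine_independent[OF ind] card by simp
  then have "affine hull S = UNIV" using aff_dim_eq_full by blast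
  then obtain u where u: "sum u S = 1" "(\<Sum>q\<in>S. u q *\<^sub>R q) = x"
    using affine_hull_finite[OF fin] by blast
  let ?l = "\<lambda>q. if q \<in> S then u q else 0"
  show ?thesis
  proof (rule ex1I[of _ ?l])
    show "(\<forall>q. q \<notin> S \<longrightarrow> ?l q = 0) \<and> (\<Sum>q\<in>S. ?l q) = 1 \<and> (\<Sum>q\<in>S. ?l q *\<^sub>R q) = x"
      using u by simp
  next
    fix l assume l: "(\<forall>q. q \<notin> S \<longrightarrow> l q = 0) \<and> (\<Sum>q\<in>S. l q) = 1 \<and> (\<Sum>q\<in>S. l q *\<^sub>R q) = x"
    let ?U = "\<lambda>q. l q - u q"
    have "sum ?U S = 0" using l u by (simp add: sum_subtractf)
    moreover have "(\<Sum>q\<in>S. ?U q *\<^sub>R q) = 0" using l u by (simp add: sum_subtractf scaleR_left_diff_distrib)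
    ultimately have "\<forall>v\<in>S. ?U v = 0" using ind affine_dependent_explicit_finite[OF fin] by blast
    then show "l = ?l" using l by (auto simp: fun_eq_iff)
  qed
qed

lemma bary_props: assumes "simplex_verts S"
  shows "(\<Sum>q\<in>S. bary S q x) = 1" "(\<Sum>q\<in>S. bary S q x *\<^sub>R q) = x"
proof -
  have T: "(\<forall>q. q \<notin> S \<longrightarrow> (THE l. (\<forall>q. q \<notin> S \<longrightarrow> l q = 0) \<and> (\<Sum>q\<in>S. l q) = 1 \<and> (\<Sum>q\<in>S. l q *\<^sub>R q) = x) q = 0) \<and>
     (\<Sum>q\<in>S. (THE l. (\<forall>q. q \<notin> S \<longrightarrow> l q = 0) \<and> (\<Sum>q\<in>S. l q) = 1 \<and> (\<Sum>q\<in>S. l q *\<^sub>R q) = x) q) = 1 \<and>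
     (\<Sum>q\<in>S. (THE l. (\<forall>q. q \<notin> S \<longrightarrow> l q = 0) \<and> (\<Sum>q\<in>S. l q) = 1 \<and> (\<Sum>q\<in>S. l q *\<^sub>R q) = x) q *\<^sub>R q) = x"
    by (rule theI'[OF bary_unique_fun[OF assms, of x]])
  show "(\<Sum>q\<in>S. bary S q x) = 1" unfolding bary_def using T by blast
  show "(\<Sum>q\<in>S. bary S q x *\<^sub>R q) = x" unfolding bary_def using T by blast
qed

lemma bary_eq: assumes "simplex_verts S" "p \<in> S" "(\<Sum>q\<in>S. u q) = 1" "(\<Sum>q\<in>S. u q *\<^sub>R q) = x"
  shows "bary S p x = u p"
proof -
  let ?l = "\<lambda>q. if q \<in> S then u q else 0"
  have P: "(\<forall>q. q \<notin> S \<longrightarrow> ?l q = 0) \<and> (\<Sum>q\<in>S. ?l q) = 1 \<and> (\<Sum>q\<in>S. ?l q *\<^sub>R q) = x"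
    using assms by simp
  have "(THE l. (\<forall>q. q \<notin> S \<longrightarrow> l q = 0) \<and> (\<Sum>q\<in>S. l q) = 1 \<and> (\<Sum>q\<in>S. l q *\<^sub>R q) = x) = ?l"
    by (rule the1_equality[OF bary_unique_fun[OF assms(1), of x]]) (rule P)
  then show ?thesis unfolding bary_def using assms(2) by simp
qed

lemma pl_bary: assumes "simplex_verts S" "p \<in> S" shows "pl (bary S p)"
proof -
  note B = bary_props[OF assms(1)]
  let ?L = "\<lambda>x. bary S p x - bary S p 0"
  have add: "bary S p (x + y) = bary S p x + bary S p y - bary S p 0" for x y
  proof (rule bary_eq[OF assms])
    show "(\<Sum>q\<in>S. bary S q x + bary S q y - bary S q 0) = 1"
      unfolding sum_subtractf sum.distrib B by simp
    have "(\<Sum>q\<in>S. (bary S q x + bary S q y - bary S q 0) *\<^sub>R q)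
       = (\<Sum>q\<in>S. bary S q x *\<^sub>R q) + (\<Sum>q\<in>S. bary S q y *\<^sub>R q) - (\<Sum>q\<in>S. bary S q 0 *\<^sub>R q)"
      unfolding sum_subtractf[symmetric] sum.distrib[symmetric] by (rule sum.cong) (auto simp: algebra_simps)
    then show "(\<Sum>q\<in>S. (bary S q x + bary S q y - bary S q 0) *\<^sub>R q) = x + y"
      unfolding B by simp
  qed
  have sc: "bary S p (c *\<^sub>R x) = c * bary S p x + (1 - c) * bary S p 0" for c x
  proof (rule bary_eq[OF assms])
    show "(\<Sum>q\<in>S. c * bary S q x + (1 - c) * bary S q 0) = 1"
      unfolding sum.distrib sum_distrib_left[symmetric] B by simp
    have "(\<Sum>q\<in>S. (c * bary S q x + (1 - c) * bary S q 0) *\<^sub>R q)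
       = c *\<^sub>R (\<Sum>q\<in>S. bary S q x *\<^sub>R q) + (1 - c) *\<^sub>R (\<Sum>q\<in>S. bary S q 0 *\<^sub>R q)"
      unfolding scaleR_sum_right sum.distrib[symmetric] by (rule sum.cong) (auto simp: algebra_simps)
    then show "(\<Sum>q\<in>S. (c * bary S q x + (1 - c) * bary S q 0) *\<^sub>R q) = c *\<^sub>R x"
      unfolding B by simp
  qed
  have "linear ?L"
  proof (rule linearI)
    fix x y show "?L (x + y) = ?L x + ?L y" using add[of x y] by linarith
  next
    fix c x show "?L (c *\<^sub>R x) = c *\<^sub>R ?L x" unfolding sc by (simp add: algebra_simps)
  qed
  then have "pl (\<lambda>x. bary S p 0 + ?L x)" by (intro pl_add pl_const pl_lin)
  then show ?thesis by simp
qed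


lemma pl_P2: assumes "P2 g" shows "pl g"
proof -
  obtain c b A where cbA: "linear A" "\<forall>x. g x = c + b \<bullet> x + x \<bullet> A x"
    using assms unfolding P2_def by blast
  have li: "linear (\<lambda>x. A x \<bullet> i)" for i
    by (rule linearI) (simp_all add: linear_add[OF cbA(1)] linear_scale[OF cbA(1)] inner_add_left)
  have "pl (\<lambda>x. c + b \<bullet> x + (\<Sum>i\<in>Basis. (x \<bullet> i) * (A x \<bullet> i)))"
    by (intro pl_add pl_const pl_lin pl_sum pl_mult li finite_Basis bounded_linear.linear[OF bounded_linear_inner_right]
        bounded_linear.linear[OF bounded_linear_inner_left])
  moreover have "g = (\<lambda>x. c + b \<bullet> x + (\<Sum>i\<in>Basis. (x \<bullet> i) * (A x \<bullet> i)))"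
    proof
    fix x show "g x = c + b \<bullet> x + (\<Sum>i\<in>Basis. (x \<bullet> i) * (A x \<bullet> i))"
      using cbA(2) euclidean_inner[of x "A x"] by simp
  qed
  ultimately show ?thesis by simp
qed

lemma pl_ZK: assumes "simplex_verts S" "ZK S f" shows "pl f"
proof -
  have fin: "finite S" using assms(1) unfolding simplex_verts_def by auto
  obtain g c where gc: "P2 g" "\<forall>x. f x = g x + (\<Sum>p\<in>S. \<Sum>q\<in>S - {p}.
          c p q * ((bary S p x)\<^sup>2 * bary S q x - bary S p x * (bary S q x)\<^sup>2))"
    using assms(2) unfolding ZK_def by blast
  have "pl (\<lambda>x. g x + (\<Sum>p\<in>S. \<Sum>q\<in>S - {p}.
          c p q * ((bary S p x)\<^sup>2 * bary S q x - bary S p x * (bary S q x)\<^sup>2)))"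
    unfolding power2_eq_square
    by (intro pl_add pl_P2[OF gc(1)] pl_sum fin finite_Diff pl_mult pl_const pl_diff pl_bary[OF assms(1)]) auto
  moreover have "f = (\<lambda>x. g x + (\<Sum>p\<in>S. \<Sum>q\<in>S - {p}.
          c p q * ((bary S p x)\<^sup>2 * bary S q x - bary S p x * (bary S q x)\<^sup>2)))"
    using gc(2) by auto
  ultimately show ?thesis by simp
qed

lemma pl_PiK: assumes "simplex_verts S" shows "pl (PiK S v)"
proof -
  have fin: "finite S" using assms(1) unfolding simplex_verts_def by auto
  have "pl (\<lambda>x. (\<Sum>p\<in>S. v p * bary S p x)
     + (\<Sum>p\<in>S. \<Sum>q\<in>S - {p}. gradK v S p (q - p) * (1/2) * bary S p x * bary S q x))"
    by (intro pl_add pl_sum fin finite_Diff pl_mult pl_const pl_bary[OF assms(1)]) auto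
  then show ?thesis unfolding PiK_def[abs_def] .
qed

lemma elem:
  assumes S: "simplex_verts S" and f: "ZK S f" and vf: "\<forall>x\<in>convex hull S. v x = f x"
  shows "integral (convex hull S) (hess_sq v) \<le> 2 * integral (convex hull S) (hess_sq (PiK S v))
           + 2 * integral (convex hull S) (hess_sq (\<lambda>x. v x - PiK S v x))"
proof -
  let ?K = "convex hull S"
  let ?P = "PiK S v"
  have fin: "finite S" using S unfolding simplex_verts_def by auto
  have cK: "compact ?K" using fin by (simp add: compact_convex_hull finite_imp_compact)
  have cvK: "convex ?K" by simp
  have plf: "pl f" by (rule pl_ZK[OF S f])
  have plP: "pl ?P" by (rule pl_PiK[OF S])
  have plD: "pl (\<lambda>x. f x - ?P x)" by (intro pl_diff plf plP)
  have neg: "negligible (frontier ?K)" by (rule negligible_convex_frontier[OF cvK])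
  have intK: "x \<in> interior ?K" if "x \<in> ?K - frontier ?K" for x
    using that cK by (simp add: frontier_def compact_imp_closed closure_closed)
  have U: "\<And>y. y \<in> interior ?K \<Longrightarrow> v y = f y" using vf interior_subset by blast
  have e1: "integral ?K (hess_sq v) = integral ?K (hess_sq f)"
    by (rule integral_spike[OF neg, symmetric]) (rule hess_local[OF plf open_interior intK U])
  have e2: "integral ?K (hess_sq (\<lambda>x. v x - ?P x)) = integral ?K (hess_sq (\<lambda>x. f x - ?P x))"
    by (rule integral_spike[OF neg, symmetric]) (rule hess_local[OF plD open_interior intK], use U in auto)
  have fe: "(\<lambda>x. ?P x + (f x - ?P x)) = f" by simp
  have pw: "hess_sq f x \<le> 2 * hess_sq ?P x + 2 * hess_sq (\<lambda>x. f x - ?P x) x" for x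
    using hess_add[OF plP plD, of x] unfolding fe .
  have i1: "hess_sq ?P integrable_on ?K" by (rule cont_int[OF cK pl_cont[OF pl_hess[OF plP]]])
  have i2: "hess_sq (\<lambda>x. f x - ?P x) integrable_on ?K" by (rule cont_int[OF cK pl_cont[OF pl_hess[OF plD]]])
  have i0: "hess_sq f integrable_on ?K" by (rule cont_int[OF cK pl_cont[OF pl_hess[OF plf]]])
  have j1: "(\<lambda>x. 2 * hess_sq ?P x) integrable_on ?K" using i1 by simp
  have j2: "(\<lambda>x. 2 * hess_sq (\<lambda>x. f x - ?P x) x) integrable_on ?K" using i2 by simp
  have "integral ?K (hess_sq f) \<le> integral ?K (\<lambda>x. 2 * hess_sq ?P x + 2 * hess_sq (\<lambda>x. f x - ?P x) x)"
    by (rule integral_le[OF i0 integrable_add[OF j1 j2]]) (simp add: pw)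
  also have "\<dots> = 2 * integral ?K (hess_sq ?P) + 2 * integral ?K (hess_sq (\<lambda>x. f x - ?P x))"
    using integral_add[OF j1 j2] integral_mult[OF i1, of 2] integral_mult[OF i2, of 2] by linarith
  finally show ?thesis unfolding e1 e2 .
qed

lemma grad_nonneg: "0 \<le> integral K (grad_sq v)"
proof (cases "grad_sq v integrable_on K")
  case True
  then show ?thesis by (rule integral_nonneg) (simp add: grad_sq_def sum_nonneg)
next
  case False
  then show ?thesis by (simp add: not_integrable_integral)
qed

lemma arith_aux: "(e::real) * H \<le> e * (2*A + 2*B) \<Longrightarrow> 0 \<le> G \<Longrightarrow> 1/2 * (e*H + G) \<le> e*(A+B) + G"
  by (simp add: algebra_simps)

theorem mainTheorem4:
  fixes \<Omega> :: "'a::euclidean_space set" and T :: "'a set set"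
    and \<epsilon> \<sigma> :: real and v :: "'a \<Rightarrow> real"
  assumes "DIM('a) \<ge> 2"
    and "polytope \<Omega>" and "convex \<Omega>" and "interior \<Omega> \<noteq> {}"
    and "triangulation T \<Omega>" and "\<sigma> > 0" and "shape_regular \<sigma> T"
    and "\<epsilon> > 0"
    and "Vh T \<Omega> v"
  shows "(1/2) * tnorm_sq \<epsilon> T v \<le> bh \<epsilon> T v"
proof -
  let ?H = "\<Sum>S\<in>T. integral (convex hull S) (hess_sq v)"
  let ?A = "\<Sum>S\<in>T. integral (convex hull S) (hess_sq (PiK S v))"
  let ?B = "\<Sum>S\<in>T. integral (convex hull S) (hess_sq (\<lambda>x. v x - PiK S v x))"
  let ?G = "\<Sum>S\<in>T. integral (convex hull S) (grad_sq v)"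
  have tri: "\<forall>S\<in>T. simplex_verts S" using conjunct1[OF conjunct2[OF conjunct2[OF iffD1[OF triangulation_def assms(5)]]]] .
  have zh: "\<forall>S\<in>T. \<exists>f. ZK S f \<and> (\<forall>x\<in>convex hull S. v x = f x)"
    using conjunct1[OF conjunct2[OF iffD1[OF Zh_def conjunct1[OF iffD1[OF Vh_def assms(9)]]]]] .
  have each: "integral (convex hull S) (hess_sq v) \<le> 2 * integral (convex hull S) (hess_sq (PiK S v))
           + 2 * integral (convex hull S) (hess_sq (\<lambda>x. v x - PiK S v x))" if ST: "S \<in> T" for S
  proof -
    obtain f where f1: "ZK S f" and f2: "\<forall>x\<in>convex hull S. v x = f x"
      using bspec[OF zh ST] by (elim exE conjE)
    show ?thesis by (rule elem[OF bspec[OF tri ST] f1 f2])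
  qed
  have "?H \<le> (\<Sum>S\<in>T. 2 * integral (convex hull S) (hess_sq (PiK S v))
           + 2 * integral (convex hull S) (hess_sq (\<lambda>x. v x - PiK S v x)))"
    by (rule sum_mono) (rule each)
  also have "\<dots> = 2 * ?A + 2 * ?B" unfolding sum.distrib sum_distrib_left ..
  finally have HAB: "?H \<le> 2 * ?A + 2 * ?B" .
  have G: "0 \<le> ?G" by (rule sum_nonneg) (rule grad_nonneg)
  have e: "0 \<le> \<epsilon>\<^sup>2" by simp
  have "\<epsilon>\<^sup>2 * ?H \<le> \<epsilon>\<^sup>2 * (2 * ?A + 2 * ?B)" by (rule mult_left_mono[OF HAB e])
  then show ?thesis unfolding tnorm_sq_def bh_def by (rule arith_aux[OF _ G])
qed

end
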